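(* Let $A_K^*\in\mathbb{R}^{n\times n}$, let $x^*(0)\in\mathbb{R}^n$, and let $x^*(t)=e^{A_K^* t}x^*(0)$. Fix sample times $t_1,\dots,t_N$, one of which equals $0$, so that $x^*(0)$ is a column of $\Lambda_0$. Let $\Lambda_i$, $\bar\Lambda_1$, $\bar\Lambda_2$ be the data matrices defined in the context. If $M\in\mathbb{R}^{n\times n}$ satisfies $M\bar\Lambda_1=\bar\Lambda_2$, then the solution $\hat x$ of $\dot{\hat x}=M\hat x$ with $\hat x(0)=x^*(0)$ satisfies $\hat x(t)=x^*(t)$ for all $t$.
   Context: Data matrices: for each $i=0,1,\dots,n$, let $x^{*(i)}$ denote the $i$-th time derivative of $x^*$. Define $\Lambda_i=[x^{*(i)}(t_1)\ \cdots\ x^{*(i)}(t_N)]\in\mathbb{R}^{n\times N}$. Define $\bar\Lambda_1=[\Lambda_0\ \Lambda_1\ \cdots\ \Lambda_{n-1}]\in\mathbb{R}^{n\times nN}$ and $\bar\Lambda_2=[\Lambda_1\ \Lambda_2\ \cdots\ \Lambda_n]\in\mathbb{R}^{n\times nN}$. In particular $\Lambda_{i}=A_K^*\Lambda_{i-1}$ for $i=1,\dots,n$, and $A_K^*\bar\Lambda_1=\bar\Lambda_2$. *)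

theory Defs
  imports "HOL-Analysis.Analysis"
begin

text \<open>Matrix powers and the matrix exponential e^A = sum_k A^k / k!.\<close>

primrec mat_pow :: "real^'n^'n \<Rightarrow> nat \<Rightarrow> real^'n^'n" where
  "mat_pow A 0 = mat 1"
| "mat_pow A (Suc k) = A ** mat_pow A k"

definition mat_exp :: "real^'n^'n \<Rightarrow> real^'n^'n" where
  "mat_exp A = (\<Sum>k. (1 / fact k) *\<^sub>R mat_pow A k)"

text \<open>i-th time derivative of a vector-valued function, taken componentwise.\<close>

definition vderiv_n :: "nat \<Rightarrow> (real \<Rightarrow> real^'n) \<Rightarrow> real \<Rightarrow> real^'n" where
  "vderiv_n i f t = (\<chi> k. (deriv ^^ i) (\<lambda>s. f s $ k) t)"

text \<open>Data matrix Lambda_i = [x^(i)(t_1) ... x^(i)(t_N)], columns indexed by the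
  finite sample index type 'm.\<close>

definition data_mat :: "(real \<Rightarrow> real^'n) \<Rightarrow> ('m \<Rightarrow> real) \<Rightarrow> nat \<Rightarrow> real^'m^'n" where
  "data_mat x ts i = (\<chi> r c. vderiv_n i x (ts c) $ r)"

end

theory Submission
  imports Defs
begin

lemma mat_pow_Suc_right: "mat_pow A (Suc k) = mat_pow A k ** A"
  by (induction k) (simp_all add: matrix_mul_assoc)

lemma mat_pow_scaleR: "mat_pow (t *\<^sub>R A) k = (t ^ k) *\<^sub>R mat_pow A k"
  by (induction k) (simp_all add: matrix_scalar_ac scalar_matrix_assoc mult.commute)

lemma mat_pow_vec_bound:
  fixes B :: "real^'n^'n"
  assumes K: "\<And>x. norm (B *v x) \<le> norm x * K" and "K \<ge> 0"
  shows "norm (mat_pow B k *v w) \<le> K ^ k * norm w"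
proof (induction k)
  case 0 then show ?case by simp
next
  case (Suc k)
  have "norm (mat_pow B (Suc k) *v w) = norm (B *v (mat_pow B k *v w))"
    by (simp add: matrix_vector_mul_assoc)
  also have "\<dots> \<le> norm (mat_pow B k *v w) * K" by (rule K)
  also have "\<dots> \<le> K ^ k * norm w * K" using Suc \<open>K \<ge> 0\<close> by (simp add: mult_right_mono)
  finally show ?case by (simp add: algebra_simps)
qed

lemma entry_le: "\<bar>X $ i $ j\<bar> \<le> norm ((X::real^'n^'m) *v axis j 1)"
proof -
  have "(X *v axis j 1) $ i = X $ i $ j"
    by (simp add: matrix_vector_mult_def axis_def if_distrib cong: if_cong)
  then show ?thesis by (metis component_le_norm_cart)
qed

lemma norm_mat_le: "norm (X::real^'n^'m) \<le> (\<Sum>i\<in>UNIV. \<Sum>j\<in>UNIV. \<bar>X $ i $ j\<bar>)"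
proof -
  have "norm X \<le> (\<Sum>i\<in>UNIV. norm (X $ i))" unfolding norm_vec_def by (rule L2_set_le_sum) simp
  also have "\<dots> \<le> (\<Sum>i\<in>UNIV. \<Sum>j\<in>UNIV. \<bar>X $ i $ j\<bar>)"
    by (rule sum_mono) (rule norm_le_l1_cart)
  finally show ?thesis .
qed

lemma mat_pow_norm_bound:
  fixes B :: "real^'n^'n"
  assumes K: "\<And>x. norm (B *v x) \<le> norm x * K" and "K \<ge> 0"
  shows "norm (mat_pow B k) \<le> real CARD('n) * real CARD('n) * K ^ k"
proof -
  have "norm (mat_pow B k) \<le> (\<Sum>i\<in>(UNIV::'n set). \<Sum>j\<in>(UNIV::'n set). \<bar>mat_pow B k $ i $ j\<bar>)"
    by (rule norm_mat_le)
  also have "\<dots> \<le> (\<Sum>i\<in>(UNIV::'n set). \<Sum>j\<in>(UNIV::'n set). K ^ k)"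
  proof (intro sum_mono)
    fix i j :: 'n
    have "\<bar>mat_pow B k $ i $ j\<bar> \<le> norm (mat_pow B k *v axis j 1)" by (rule entry_le)
    also have "\<dots> \<le> K ^ k * norm (axis j (1::real))" by (rule mat_pow_vec_bound[OF K \<open>K \<ge> 0\<close>])
    finally show "\<bar>mat_pow B k $ i $ j\<bar> \<le> K ^ k" by (simp add: norm_axis_1)
  qed
  also have "\<dots> = real CARD('n) * real CARD('n) * K ^ k" by simp
  finally show ?thesis .
qed

lemma mat_exp_sums: "(\<lambda>k. (1 / fact k) *\<^sub>R mat_pow B k) sums mat_exp (B::real^'n^'n)"
proof -
  obtain K where K: "K > 0" "\<And>x. norm (B *v x) \<le> norm x * K"
    using bounded_linear.pos_bounded[OF matrix_vector_mul_bounded_linear[of B]] by blast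
  define C where "C = real CARD('n) * real CARD('n)"
  have S: "summable (\<lambda>k. C * (inverse (fact k) * K ^ k))"
    by (intro summable_mult summable_exp)
  moreover have NB: "norm ((1 / fact k) *\<^sub>R mat_pow B k) \<le> C * (inverse (fact k) * K ^ k)" for k
  proof -
    have "norm ((1 / fact k) *\<^sub>R mat_pow B k) = inverse (fact k) * norm (mat_pow B k)"
      by (simp add: divide_inverse)
    also have "\<dots> \<le> inverse (fact k) * (C * K ^ k)"
    proof -
      have nb: "norm (mat_pow B k) \<le> C * K ^ k"
        unfolding C_def using K(1) by (intro mat_pow_norm_bound[OF K(2)]) simp
      show ?thesis by (rule mult_left_mono[OF nb]) simp
    qed
    finally show ?thesis by (simp add: algebra_simps)
  qed
  have "summable (\<lambda>k. (1 / fact k) *\<^sub>R mat_pow B k)"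
    by (rule summable_comparison_test[OF _ S]) (use NB in blast)
   then show ?thesis unfolding mat_exp_def by (rule summable_sums)
qed

lemma aux_fact: "of_nat (Suc k) * (y / fact (Suc k)) = (y::real) / fact k"
proof -
  have "fact (Suc k) = of_nat (Suc k) * (fact k :: real)" by (rule fact_Suc)
  then show ?thesis by (simp del: of_nat_Suc fact_Suc)
qed

lemma bl_mv: "bounded_linear (\<lambda>X::real^'n^'m. X *v v)"
proof -
  have "linear (\<lambda>X::real^'n^'m. X *v v)"
    by (rule linearI) (rule matrix_vector_mult_add_rdistrib, rule scaleR_matrix_vector_assoc[symmetric])
  then show ?thesis by (simp add: linear_conv_bounded_linear)
qed

lemma G_sums:
  "(\<lambda>k. (t ^ k / fact k) *\<^sub>R (mat_pow A k *v v)) sums (mat_exp (t *\<^sub>R A) *v (v::real^'n))"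
proof -
  have "(\<lambda>k. ((1 / fact k) *\<^sub>R mat_pow (t *\<^sub>R A) k) *v v) sums (mat_exp (t *\<^sub>R A) *v v)"
    by (rule bounded_linear.sums[OF bl_mv mat_exp_sums])
  then show ?thesis
    by (simp add: mat_pow_scaleR scaleR_matrix_vector_assoc)
qed

lemma G_comp_sums:
  "(\<lambda>k. ((mat_pow A k *v v) $ r / fact k) * t ^ k) sums ((mat_exp (t *\<^sub>R A) *v (v::real^'n)) $ r)"
  using sums_vec_nth[OF G_sums[of t A v], of r] by (simp add: field_simps)

lemma G_comp_deriv:
  fixes A :: "real^'n^'n"
  shows "((\<lambda>s. (mat_exp (s *\<^sub>R A) *v v) $ r) has_real_derivative
     (mat_exp (t *\<^sub>R A) *v (A *v v)) $ r) (at t)"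
proof -
  define c where "c k = (mat_pow A k *v v) $ r / fact k" for k
  have fun_eq: "(\<lambda>s. (mat_exp (s *\<^sub>R A) *v v) $ r) = (\<lambda>s. \<Sum>n. c n * s ^ n)"
    unfolding c_def by (rule ext, rule sums_unique, rule G_comp_sums)
  have summ: "summable (\<lambda>n. c n * y ^ n)" for y
    unfolding c_def by (rule sums_summable, rule G_comp_sums)
  have dc: "diffs c = (\<lambda>k. (mat_pow A k *v (A *v v)) $ r / fact k)"
  proof
    fix k
    have "diffs c k = of_nat (Suc k) * ((mat_pow A (Suc k) *v v) $ r / fact (Suc k))"
      by (simp add: diffs_def c_def)
    also have "\<dots> = (mat_pow A (Suc k) *v v) $ r / fact k"
      by (rule aux_fact)
    also have "\<dots> = (mat_pow A k *v (A *v v)) $ r / fact k"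
      by (simp only: mat_pow_Suc_right matrix_vector_mul_assoc)
    finally show "diffs c k = (mat_pow A k *v (A *v v)) $ r / fact k" .
  qed
  have "(\<Sum>n. diffs c n * t ^ n) = (mat_exp (t *\<^sub>R A) *v (A *v v)) $ r"
    unfolding dc by (rule sums_unique[symmetric], rule G_comp_sums)
  then show ?thesis
    using termdiffs_strong_converges_everywhere[OF summ, of t] unfolding fun_eq by simp
qed

lemma G_deriv:
  fixes A :: "real^'n^'n"
  shows "((\<lambda>s. mat_exp (s *\<^sub>R A) *v v) has_vector_derivative (mat_exp (t *\<^sub>R A) *v (A *v v))) (at t)"
  unfolding has_vector_derivative_def
proof (subst has_derivative_componentwise_within, intro ballI)
  fix i :: "real^'n" assume "i \<in> Basis"
  then obtain r where i: "i = axis r 1" by (auto simp: Basis_vec_def)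
  show "((\<lambda>x. (mat_exp (x *\<^sub>R A) *v v) \<bullet> i) has_derivative
      (\<lambda>x. (x *\<^sub>R (mat_exp (t *\<^sub>R A) *v (A *v v))) \<bullet> i)) (at t)"
    using G_comp_deriv[of A v r t] unfolding i has_field_derivative_def
    by (simp add: cart_eq_inner_axis[symmetric] mult_commute_abs)
qed

lemma G_zero: "mat_exp (0 *\<^sub>R A) *v (v::real^'n) = v"
proof -
  have "(\<lambda>k. ((0::real) ^ k / fact k) *\<^sub>R (mat_pow A k *v v)) = (\<lambda>k. if k = 0 then v else 0)"
    by (auto simp: fun_eq_iff)
  then have "(\<lambda>k. if k = 0 then v else 0) sums (mat_exp (0 *\<^sub>R A) *v v)"
    using G_sums[of 0 A v] by simp
  moreover have "(\<lambda>k. if k = 0 then v else 0) sums v" using sums_single[of 0 "\<lambda>_. v"] by simp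
  ultimately show ?thesis using sums_unique2 by blast
qed

lemma G_iter_deriv:
  fixes A :: "real^'n^'n"
  shows "(deriv ^^ i) (\<lambda>s. (mat_exp (s *\<^sub>R A) *v v) $ k) =
    (\<lambda>s. (mat_exp (s *\<^sub>R A) *v (mat_pow A i *v v)) $ k)"
proof (induction i)
  case 0 then show ?case by simp
next
  case (Suc i)
  have "(deriv ^^ Suc i) (\<lambda>s. (mat_exp (s *\<^sub>R A) *v v) $ k) =
      deriv (\<lambda>s. (mat_exp (s *\<^sub>R A) *v (mat_pow A i *v v)) $ k)"
    using Suc by simp
  also have "\<dots> = (\<lambda>s. (mat_exp (s *\<^sub>R A) *v (A *v (mat_pow A i *v v))) $ k)"
    by (rule ext, rule DERIV_imp_deriv, rule G_comp_deriv)
  also have "\<dots> = (\<lambda>s. (mat_exp (s *\<^sub>R A) *v (mat_pow A (Suc i) *v v)) $ k)"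
    by (simp add: matrix_vector_mul_assoc)
  finally show ?case .
qed

lemma krylov:
  fixes A M :: "real^'n^'n"
  assumes hyp: "\<forall>i<CARD('n). M *v (mat_pow A i *v x) = mat_pow A (Suc i) *v x"
  shows "M *v (mat_pow A k *v x) = A *v (mat_pow A k *v x)"
proof -
  define v where "v k = mat_pow A k *v x" for k
  define V where "V d = v ` {..<d}" for d
  have vSuc: "v (Suc k) = A *v v k" for k by (simp add: v_def matrix_vector_mul_assoc)
  have "\<exists>d\<le>CARD('n). v d \<in> span (V d)"
  proof (rule ccontr)
    assume "\<not> ?thesis"
    then have nin: "\<And>d. d \<le> CARD('n) \<Longrightarrow> v d \<notin> span (V d)" by auto
    have "d \<le> Suc CARD('n) \<Longrightarrow> dim (V d) = d" for d
    proof (induction d)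
      case 0 then show ?case by (simp add: V_def)
    next
      case (Suc d)
      have "V (Suc d) = insert (v d) (V d)" by (auto simp: V_def lessThan_Suc)
      then show ?case using Suc nin[of d] by (simp add: dim_insert)
    qed
    then have "dim (V (Suc CARD('n))) = Suc CARD('n)" by simp
    moreover have "dim (V (Suc CARD('n))) \<le> CARD('n)" by (rule dim_subset_UNIV_cart)
    ultimately show False by simp
  qed
  then obtain d where d: "d \<le> CARD('n)" "v d \<in> span (V d)" by blast
  have AV: "(*v) A ` V d \<subseteq> span (V d)"
  proof
    fix y assume "y \<in> (*v) A ` V d"
    then obtain i where i: "i < d" "y = v (Suc i)" by (auto simp: V_def vSuc)
    show "y \<in> span (V d)"
    proof (cases "Suc i = d")
      case True then show ?thesis using d i by simp
    next
      case False then show ?thesis using i by (intro span_base) (auto simp: V_def)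
    qed
  qed
  have inv: "A *v y \<in> span (V d)" if "y \<in> span (V d)" for y
  proof -
    have "A *v y \<in> (*v) A ` span (V d)" using that by blast
    also have "\<dots> = span ((*v) A ` V d)" by (rule span_linear_image[symmetric]) simp
    also have "\<dots> \<subseteq> span (V d)" using AV by (simp add: span_minimal)
    finally show ?thesis .
  qed
  have allin: "v k \<in> span (V d)" for k
  proof (induction k)
    case 0 then show ?case
      using d by (cases "d = 0") (auto intro: span_base simp: V_def)
  next
    case (Suc k) then show ?case using inv vSuc by simp
  qed
  have eq: "M *v b = A *v b" if b_in: "b \<in> V d" for b
  proof -
    obtain i where "i < d" "b = v i" using b_in by (auto simp: V_def)
    then show "M *v b = A *v b" using hyp d vSuc unfolding v_def by auto
  qed
  have agree: "M *v y = A *v y" if "y \<in> span (V d)" for y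
    using linear_eq_on_span[of "(*v) M" "(*v) A", OF _ _ eq that] by simp
  show ?thesis using agree[OF allin[of k]] by (simp add: v_def)
qed

lemma ode_unique:
  fixes M :: "real^'n^'n" and z :: "real \<Rightarrow> real^'n"
  assumes zd: "\<And>t. (z has_vector_derivative (M *v z t)) (at t)" and z0: "z 0 = 0"
  shows "z t = 0"
proof -
  obtain K where K: "K > 0" "\<And>x. norm (M *v x) \<le> norm x * K"
    using bounded_linear.pos_bounded[OF matrix_vector_mul_bounded_linear[of M]] by blast
  define f where "f s = z s \<bullet> z s" for s
  define f' where "f' s = 2 * (z s \<bullet> (M *v z s))" for s
  have fd: "(f has_real_derivative f' s) (at s)" for s
  proof -
    have zd': "(z has_derivative (\<lambda>h. h *\<^sub>R (M *v z s))) (at s)"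
      using zd[of s] by (simp add: has_vector_derivative_def)
    have "(f has_derivative (\<lambda>h. z s \<bullet> (h *\<^sub>R (M *v z s)) + (h *\<^sub>R (M *v z s)) \<bullet> z s)) (at s)"
      unfolding f_def by (rule has_derivative_inner[OF zd' zd'])
    moreover have "(\<lambda>h. z s \<bullet> (h *\<^sub>R (M *v z s)) + (h *\<^sub>R (M *v z s)) \<bullet> z s) = (*) (f' s)"
      by (auto simp: fun_eq_iff inner_commute algebra_simps f'_def)
    ultimately show ?thesis by (simp add: has_field_derivative_def)
  qed
  have bnd: "\<bar>f' s\<bar> \<le> 2 * K * f s" for s
  proof -
    have "\<bar>z s \<bullet> (M *v z s)\<bar> \<le> norm (z s) * norm (M *v z s)" by (rule Cauchy_Schwarz_ineq2)
    also have "\<dots> \<le> norm (z s) * (norm (z s) * K)" by (rule mult_left_mono[OF K(2)]) simp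
    also have "\<dots> = K * f s" by (simp add: f_def power2_norm_eq_inner[symmetric] power2_eq_square)
    finally show ?thesis by (simp add: f'_def abs_mult)
  qed
  have fnn: "f s \<ge> 0" for s by (simp add: f_def)
  have f0: "f 0 = 0" by (simp add: f_def z0)
  have "f t = 0"
  proof (cases "t \<ge> 0")
    case True
    define h where "h s = exp (- (2 * K) * s) * f s" for s
    have "h t \<le> h 0"
    proof (rule DERIV_nonpos_imp_nonincreasing[of 0 t h, OF True])
      fix x :: real
      have "(h has_real_derivative (exp (- (2 * K) * x) * (- (2 * K)) * f x + exp (- (2 * K) * x) * f' x)) (at x)"
        unfolding h_def by (auto intro!: derivative_eq_intros fd)
      moreover have "exp (- (2 * K) * x) * (- (2 * K)) * f x + exp (- (2 * K) * x) * f' x \<le> 0"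
      proof -
        have "f' x - 2 * K * f x \<le> 0" using bnd[of x] by linarith
        then have "exp (- (2 * K) * x) * (f' x - 2 * K * f x) \<le> 0"
          by (simp add: mult_nonneg_nonpos)
        then show ?thesis by (simp add: algebra_simps)
      qed
      ultimately show "\<exists>y. (h has_real_derivative y) (at x) \<and> y \<le> 0" by blast
    qed
    then have "exp (- (2 * K) * t) * f t \<le> 0" by (simp add: h_def f0)
    then have "f t \<le> 0" by (simp add: mult_le_0_iff)
    then show ?thesis using fnn[of t] by simp
  next
    case False
    define h where "h s = exp ((2 * K) * s) * f s" for s
    have "h t \<le> h 0"
    proof (rule DERIV_nonneg_imp_nondecreasing[of t 0 h])
      show "t \<le> 0" using False by simp
      fix x :: real
      have "(h has_real_derivative (exp ((2 * K) * x) * (2 * K) * f x + exp ((2 * K) * x) * f' x)) (at x)"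
        unfolding h_def by (auto intro!: derivative_eq_intros fd)
      moreover have "exp ((2 * K) * x) * (2 * K) * f x + exp ((2 * K) * x) * f' x \<ge> 0"
      proof -
        have "f' x + 2 * K * f x \<ge> 0" using bnd[of x] by linarith
        then have "exp ((2 * K) * x) * (f' x + 2 * K * f x) \<ge> 0" by simp
        then show ?thesis by (simp add: algebra_simps)
      qed
      ultimately show "\<exists>y. (h has_real_derivative y) (at x) \<and> y \<ge> 0" by blast
    qed
    then have "exp ((2 * K) * t) * f t \<le> 0" by (simp add: h_def f0)
    then have "f t \<le> 0" by (simp add: mult_le_0_iff)
    then show ?thesis using fnn[of t] by simp
  qed
  then show ?thesis by (simp add: f_def)
qed

theorem lemma3:
  fixes A M :: "real^'n^'n" and x0 :: "real^'n"
    and ts :: "'m::finite \<Rightarrow> real"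
    and xs xh :: "real \<Rightarrow> real^'n"
  assumes xs_def: "\<And>t. xs t = mat_exp (t *\<^sub>R A) *v x0"
    and zero_sample: "\<exists>j. ts j = 0"
    and M_data: "\<forall>i<CARD('n). M ** data_mat xs ts i = data_mat xs ts (Suc i)"
    and xh_ode: "\<And>t. (xh has_vector_derivative (M *v xh t)) (at t)"
    and xh_init: "xh 0 = x0"
  shows "\<forall>t. xh t = xs t"
proof -
  have xs_eq: "xs = (\<lambda>s. mat_exp (s *\<^sub>R A) *v x0)" by (rule ext) (rule xs_def)
  have vd: "vderiv_n i xs s = mat_exp (s *\<^sub>R A) *v (mat_pow A i *v x0)" for i s
    unfolding vderiv_n_def xs_eq by (simp add: G_iter_deriv vec_eq_iff)
  obtain j where j: "ts j = 0" using zero_sample by blast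
  have col: "data_mat xs ts i $ r $ j = (mat_pow A i *v x0) $ r" for i r
    unfolding data_mat_def using G_zero[of A "mat_pow A i *v x0"] by (simp add: vd j)
  have hyp: "\<forall>i<CARD('n). M *v (mat_pow A i *v x0) = mat_pow A (Suc i) *v x0"
  proof (intro allI impI)
    fix i assume i: "i < CARD('n)"
    show "M *v (mat_pow A i *v x0) = mat_pow A (Suc i) *v x0"
    proof (rule vec_eq_iff[THEN iffD2, rule_format])
      fix r
      have "(M ** data_mat xs ts i) $ r $ j = data_mat xs ts (Suc i) $ r $ j"
        using M_data i by simp
      then show "(M *v (mat_pow A i *v x0)) $ r = (mat_pow A (Suc i) *v x0) $ r"
        by (simp add: matrix_matrix_mult_def matrix_vector_mult_def col del: mat_pow.simps)
    qed
  qed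
  have kr: "M *v (mat_pow A k *v x0) = mat_pow A (Suc k) *v x0" for k
    using krylov[OF hyp, of k] by (simp add: matrix_vector_mul_assoc)
  have xs_d: "(xs has_vector_derivative (M *v xs t)) (at t)" for t
  proof -
    have s1: "(\<lambda>k. M *v ((t ^ k / fact k) *\<^sub>R (mat_pow A k *v x0))) sums (M *v xs t)"
      unfolding xs_def by (rule bounded_linear.sums[OF matrix_vector_mul_bounded_linear G_sums])
    have s2: "(\<lambda>k. (t ^ k / fact k) *\<^sub>R (mat_pow A k *v (A *v x0))) sums (mat_exp (t *\<^sub>R A) *v (A *v x0))"
      by (rule G_sums)
    have feq: "(\<lambda>k. M *v ((t ^ k / fact k) *\<^sub>R (mat_pow A k *v x0))) =
        (\<lambda>k. (t ^ k / fact k) *\<^sub>R (mat_pow A k *v (A *v x0)))"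
    proof
      fix k
      have "M *v ((t ^ k / fact k) *\<^sub>R (mat_pow A k *v x0)) = (t ^ k / fact k) *\<^sub>R (M *v (mat_pow A k *v x0))"
        by (simp add: matrix_vector_mult_scaleR del: mat_pow.simps)
      also have "\<dots> = (t ^ k / fact k) *\<^sub>R (mat_pow A k *v (A *v x0))"
        using kr[of k] by (simp add: mat_pow_Suc_right matrix_vector_mul_assoc del: mat_pow.simps)
      finally show "M *v ((t ^ k / fact k) *\<^sub>R (mat_pow A k *v x0)) = (t ^ k / fact k) *\<^sub>R (mat_pow A k *v (A *v x0))" .
    qed
    from s1 have s1': "(\<lambda>k. (t ^ k / fact k) *\<^sub>R (mat_pow A k *v (A *v x0))) sums (M *v xs t)"
      unfolding feq .
    have eq: "M *v xs t = mat_exp (t *\<^sub>R A) *v (A *v x0)" by (rule sums_unique2[OF s1' s2])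
    show ?thesis unfolding eq unfolding xs_eq by (rule G_deriv)
  qed
  show ?thesis
  proof
    fix t
    have "(\<lambda>s. xh s - xs s) t = 0"
    proof (rule ode_unique[where M=M])
      fix s
      show "((\<lambda>s. xh s - xs s) has_vector_derivative (M *v (xh s - xs s))) (at s)"
        using has_vector_derivative_diff[OF xh_ode xs_d] by (simp add: matrix_vector_mult_diff_distrib)
      have "xs 0 = x0" using xs_def[of 0] G_zero[of A x0] by simp
      then show "xh 0 - xs 0 = 0" using xh_init by simp
    qed
    then show "xh t = xs t" by simp
  qed
qed

end
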